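(* Let $V_1,V_2,V_3$ be closed subspaces of a Hilbert space $\mathcal H$ such that for each pair $i\ne j$ neither of $V_i,V_j$ contains the other, and let $0<\alpha_{ij}\le\angle(V_i,V_j)$ with $\varepsilon_{ij}=\cos\alpha_{ij}$ ($\alpha_{ij}=\alpha_{ji}$). Then, whenever the angle on the left-hand side is defined (i.e. neither of the two subspaces involved contains the other): (a) $\cos\angle(\overline{V_1+V_3},\overline{V_2+V_3})\le\dfrac{\varepsilon_{12}+\varepsilon_{13}\varepsilon_{23}}{\sqrt{1-\varepsilon_{13}^2}\sqrt{1-\varepsilon_{23}^2}}$; (b) $\cos\angle(V_1\cap V_3,V_2\cap V_3)\le\dfrac{\varepsilon_{12}+\varepsilon_{13}\varepsilon_{23}}{\sqrt{1-\varepsilon_{13}^2}\sqrt{1-\varepsilon_{23}^2}}$.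
   Context: $\overline{V_i+V_3}$ is the closure of $V_i+V_3$. For closed subspaces $W_1,W_2$ neither of which contains the other, the (Friederichs) angle $\angle(W_1,W_2)\in[0,\pi/2]$ is defined by $\cos\angle(W_1,W_2)=\sup\{|\langle w_1,w_2\rangle| : w_i\in W_i,\ \|w_i\|=1,\ w_i\perp W_1\cap W_2\}$. *)

theory Defs
  imports "HOL-Analysis.Analysis"
begin

definition closed_subspace :: "'a::real_inner set \<Rightarrow> bool" where
  "closed_subspace V \<longleftrightarrow> subspace V \<and> closed V"

definition friedrichs_cos :: "'a::real_inner set \<Rightarrow> 'a set \<Rightarrow> real" where
  "friedrichs_cos W1 W2 = Sup {\<bar>w1 \<bullet> w2\<bar> | w1 w2.
       w1 \<in> W1 \<and> w2 \<in> W2 \<and> norm w1 = 1 \<and> norm w2 = 1 \<and>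
       (\<forall>x \<in> W1 \<inter> W2. w1 \<bullet> x = 0) \<and> (\<forall>x \<in> W1 \<inter> W2. w2 \<bullet> x = 0)}"

definition friedrichs_angle :: "'a::real_inner set \<Rightarrow> 'a set \<Rightarrow> real" where
  "friedrichs_angle W1 W2 = arccos (friedrichs_cos W1 W2)"

definition ssum :: "'a::real_vector set \<Rightarrow> 'a set \<Rightarrow> 'a set" where
  "ssum A B = {x + y | x y. x \<in> A \<and> y \<in> B}"

end

theory Submission
  imports Defs
begin


lemma parallelogram:
  fixes u w :: "'a::real_inner"
  shows "norm (u - w)^2 + norm (u + w)^2 = 2 * norm u ^2 + 2 * norm w ^2"
  by (simp add: power2_norm_eq_inner inner_diff_left inner_diff_right inner_add_left inner_add_right inner_commute)

lemma proj_exists: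
  fixes V :: "'a::{real_inner,complete_space} set"
  assumes sV: "subspace V" and cV: "closed V"
  shows "\<exists>p\<in>V. \<forall>v\<in>V. (x - p) \<bullet> v = 0"
proof -
  define D where "D = (\<lambda>a. norm (x - a)) ` V"
  define d where "d = Inf D"
  have D0: "D \<noteq> {}" using sV unfolding D_def by (auto simp: subspace_def)
  have bD: "bdd_below D" unfolding D_def by (rule bdd_belowI[of _ 0]) auto
  have dle: "d \<le> norm (x - a)" if "a \<in> V" for a
    unfolding d_def D_def using bD that by (auto intro!: cInf_lower simp: D_def)
  have d0: "0 \<le> d" unfolding d_def using D0 by (auto intro!: cInf_greatest simp: D_def)
  have "\<forall>n. \<exists>a. a \<in> V \<and> norm (x - a) < d + 1 / real (Suc n)"
  proof
    fix n
    have "Inf D < d + 1 / real (Suc n)" unfolding d_def by simp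
    then obtain y where "y \<in> D" "y < d + 1 / real (Suc n)" using cInf_less_iff[OF D0 bD] by blast
    then show "\<exists>a. a \<in> V \<and> norm (x - a) < d + 1 / real (Suc n)" unfolding D_def by auto
  qed
  then obtain f where fV: "\<And>n. f n \<in> V" and fd: "\<And>n. norm (x - f n) < d + 1 / real (Suc n)"
    by metis
  have key: "norm (f m - f n)^2 \<le> 2 * (d + 1 / real (Suc m))^2 + 2 * (d + 1 / real (Suc n))^2 - 4 * d^2" for m n
  proof -
    have mid: "(1/2) *\<^sub>R (f m + f n) \<in> V" using sV fV by (simp add: subspace_add subspace_scale)
    have "d \<le> norm (x - (1/2) *\<^sub>R (f m + f n))" by (rule dle[OF mid])
    hence "d^2 \<le> norm (x - (1/2) *\<^sub>R (f m + f n))^2" using d0 by (simp add: power_mono)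
    moreover have "norm ((x - f m) + (x - f n)) = 2 * norm (x - (1/2) *\<^sub>R (f m + f n))"
    proof -
      have "(x - f m) + (x - f n) = 2 *\<^sub>R (x - (1/2) *\<^sub>R (f m + f n))"
        by (simp add: algebra_simps scaleR_2)
      thus ?thesis by simp
    qed
    moreover have "norm ((x - f m) - (x - f n)) = norm (f m - f n)" by (simp add: norm_minus_commute)
    moreover note parallelogram[of "x - f m" "x - f n"]
    moreover have "norm (x - f m)^2 \<le> (d + 1 / real (Suc m))^2"
      using fd[of m] by (intro power_mono) auto
    moreover have "norm (x - f n)^2 \<le> (d + 1 / real (Suc n))^2"
      using fd[of n] by (intro power_mono) auto
    ultimately show ?thesis by (simp add: power_mult_distrib)
  qed
  have "Cauchy f"
  proof (rule CauchyI)
    fix e :: real assume e: "0 < e"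
    have "0 < e^2 / (4 * (2 * d + 1))" using e d0 by (simp add: add_nonneg_pos)
    then obtain N where N: "1 / real (Suc N) < e^2 / (4 * (2 * d + 1))"
      by (rule nat_approx_posE)
    show "\<exists>M. \<forall>m\<ge>M. \<forall>n\<ge>M. norm (f m - f n) < e"
    proof (intro exI allI impI)
      fix m n assume mN: "N \<le> m" and nN: "N \<le> n"
      define t where "t = 1 / real (Suc N)"
      have t0: "0 < t" "t \<le> 1" unfolding t_def by (auto simp: field_simps)
      have tm: "1 / real (Suc m) \<le> t" unfolding t_def using mN by (intro divide_left_mono) auto
      have tn: "1 / real (Suc n) \<le> t" unfolding t_def using nN by (intro divide_left_mono) auto
      have "(d + 1 / real (Suc m))^2 \<le> (d + t)^2" using tm d0 by (intro power_mono) auto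
      moreover have "(d + 1 / real (Suc n))^2 \<le> (d + t)^2" using tn d0 by (intro power_mono) auto
      ultimately have "norm (f m - f n)^2 \<le> 4 * (d+t)^2 - 4 * d^2" using key[of m n] by linarith
      also have "\<dots> = 4 * t * (2 * d + t)" by (simp add: power2_eq_square algebra_simps)
      also have "\<dots> \<le> 4 * t * (2 * d + 1)" using t0 by (intro mult_left_mono) auto
      also have "\<dots> < e^2" using N t0 d0 unfolding t_def by (simp add: field_simps)
      finally have "norm (f m - f n)^2 < e^2" .
      thus "norm (f m - f n) < e" using e by (smt (verit) power_mono norm_ge_zero)
    qed
  qed
  then obtain p where fp: "f \<longlonglongrightarrow> p" using Cauchy_convergent_iff convergent_def by blast
  have pV: "p \<in> V" using cV fV fp closed_sequentially by blast
  have "(\<lambda>n. norm (x - f n)) \<longlonglongrightarrow> norm (x - p)"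
    by (intro tendsto_intros fp)
  moreover have "(\<lambda>n. d + 1 / real (Suc n)) \<longlonglongrightarrow> d + 0"
    by (intro tendsto_intros LIMSEQ_Suc[OF lim_inverse_n'])
  ultimately have "norm (x - p) \<le> d"
    using fd by (intro LIMSEQ_le[of "\<lambda>n. norm (x - f n)" _ "\<lambda>n. d + 1 / real (Suc n)"]) (auto intro: less_imp_le)
  hence pmin: "norm (x - p) \<le> norm (x - a)" if "a \<in> V" for a using dle[OF that] by linarith
  show ?thesis
  proof (intro bexI[OF _ pV] ballI)
    fix v assume vV: "v \<in> V"
    show "(x - p) \<bullet> v = 0"
    proof (cases "v = 0")
      case True thus ?thesis by simp
    next
      case False
      define t where "t = ((x - p) \<bullet> v) / (v \<bullet> v)"
      have vv: "v \<bullet> v > 0" using False by simp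
      have "p + t *\<^sub>R v \<in> V" using sV pV vV by (simp add: subspace_add subspace_scale)
      hence "norm (x - p)^2 \<le> norm (x - (p + t *\<^sub>R v))^2" using pmin by (intro power_mono) auto
      also have "norm (x - (p + t *\<^sub>R v))^2 = norm (x - p)^2 - 2 * t * ((x - p) \<bullet> v) + t^2 * (v \<bullet> v)"
      proof -
        have e: "norm ((x - p) - t *\<^sub>R v)^2 = norm (x - p)^2 - 2 * t * ((x - p) \<bullet> v) + t^2 * (v \<bullet> v)"
          by (simp only: power2_norm_eq_inner) (simp add: inner_diff_left inner_diff_right inner_commute algebra_simps power2_eq_square)
        thus ?thesis by (metis diff_diff_eq)
      qed
      finally have "0 \<le> t^2 * (v \<bullet> v) - 2 * t * ((x - p) \<bullet> v)" by simp
      also have "\<dots> = - (((x - p) \<bullet> v)^2 / (v \<bullet> v))" unfolding t_def using vv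
        by (simp add: power2_eq_square field_simps)
      finally have "((x - p) \<bullet> v)^2 / (v \<bullet> v) \<le> 0" by simp
      hence "((x - p) \<bullet> v)^2 \<le> 0" using vv by (simp add: divide_le_0_iff)
      thus ?thesis by simp
    qed
  qed
qed




definition oc :: "'a::real_inner set \<Rightarrow> 'a set" where
  "oc V = {x. \<forall>v\<in>V. x \<bullet> v = 0}"

definition proj :: "'a::real_inner set \<Rightarrow> 'a \<Rightarrow> 'a" where
  "proj V x = (SOME p. p \<in> V \<and> (\<forall>v\<in>V. (x - p) \<bullet> v = 0))"

lemma oc_iff: "x \<in> oc V \<longleftrightarrow> (\<forall>v\<in>V. x \<bullet> v = 0)" by (simp add: oc_def)

context
  fixes V :: "'a::{real_inner,complete_space} set"
  assumes cs: "closed_subspace V"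
begin

lemma proj_spec: "proj V x \<in> V \<and> (\<forall>v\<in>V. (x - proj V x) \<bullet> v = 0)"
proof -
  have "\<exists>p. p \<in> V \<and> (\<forall>v\<in>V. (x - p) \<bullet> v = 0)"
    using proj_exists[of V x] cs unfolding closed_subspace_def by blast
  thus ?thesis unfolding proj_def by (rule someI_ex)
qed

lemma proj_in: "proj V x \<in> V" using proj_spec by blast
lemma proj_orth: "v \<in> V \<Longrightarrow> (x - proj V x) \<bullet> v = 0" using proj_spec by blast
lemma proj_orth': "v \<in> V \<Longrightarrow> v \<bullet> (x - proj V x) = 0" using proj_orth by (simp add: inner_commute)

lemma sV: "subspace V" using cs by (simp add: closed_subspace_def)
lemma cV: "closed V" using cs by (simp add: closed_subspace_def)

lemma proj_unique:
  assumes "p \<in> V" "\<And>v. v \<in> V \<Longrightarrow> (x - p) \<bullet> v = 0"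
  shows "proj V x = p"
proof -
  have d: "proj V x - p \<in> V" using sV proj_in assms(1) by (simp add: subspace_diff)
  have "(proj V x - p) \<bullet> (proj V x - p) = (x - p) \<bullet> (proj V x - p) - (x - proj V x) \<bullet> (proj V x - p)"
    by (simp add: inner_diff_left)
  also have "\<dots> = 0" using assms(2)[OF d] proj_orth[OF d] by simp
  finally show ?thesis by simp
qed

lemma proj_id: "x \<in> V \<Longrightarrow> proj V x = x"
  by (rule proj_unique) auto

lemma proj_zero: "x \<in> oc V \<Longrightarrow> proj V x = 0"
  by (rule proj_unique) (auto simp: oc_iff sV subspace_0)

lemma proj_add: "proj V (x + y) = proj V x + proj V y"
proof (rule proj_unique)
  show "proj V x + proj V y \<in> V" using sV proj_in by (simp add: subspace_add)
  fix v assume v: "v \<in> V"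
  have "(x + y - (proj V x + proj V y)) \<bullet> v = (x - proj V x) \<bullet> v + (y - proj V y) \<bullet> v"
    by (simp add: inner_diff_left inner_add_left)
  thus "(x + y - (proj V x + proj V y)) \<bullet> v = 0" using proj_orth[OF v, of x] proj_orth[OF v, of y]
    by simp
qed

lemma proj_scale: "proj V (c *\<^sub>R x) = c *\<^sub>R proj V x"
proof (rule proj_unique)
  show "c *\<^sub>R proj V x \<in> V" using sV proj_in by (simp add: subspace_scale)
  fix v assume v: "v \<in> V"
  have "c *\<^sub>R x - c *\<^sub>R proj V x = c *\<^sub>R (x - proj V x)" by (simp add: scaleR_diff_right)
  thus "(c *\<^sub>R x - c *\<^sub>R proj V x) \<bullet> v = 0" using proj_orth[OF v, of x]
    by (simp add: inner_scaleR_left)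
qed

lemma proj_diff: "proj V (x - y) = proj V x - proj V y"
proof (rule proj_unique)
  show "proj V x - proj V y \<in> V" using sV proj_in by (simp add: subspace_diff)
  fix v assume v: "v \<in> V"
  have "x - y - (proj V x - proj V y) = (x - proj V x) - (y - proj V y)" by simp
  thus "(x - y - (proj V x - proj V y)) \<bullet> v = 0" using proj_orth[OF v, of x] proj_orth[OF v, of y]
    by (simp add: inner_diff_left)
qed

lemma proj_inner: "proj V x \<bullet> y = proj V x \<bullet> proj V y"
proof -
  have "proj V x \<bullet> (y - proj V y) = 0" by (rule proj_orth'[OF proj_in])
  thus ?thesis by (simp add: inner_diff_right)
qed

lemma proj_sym: "proj V x \<bullet> y = x \<bullet> proj V y"
  using proj_inner[of x y] proj_inner[of y x] by (simp add: inner_commute)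

lemma proj_pyth: "norm x ^2 = norm (proj V x)^2 + norm (x - proj V x)^2"
proof -
  have o: "proj V x \<bullet> (x - proj V x) = 0" by (rule proj_orth'[OF proj_in])
  have "x \<bullet> x = (proj V x + (x - proj V x)) \<bullet> (proj V x + (x - proj V x))" by simp
  also have "\<dots> = proj V x \<bullet> proj V x + (x - proj V x) \<bullet> (x - proj V x)"
    using o by (simp only: inner_add_left inner_add_right inner_commute)
  finally show ?thesis by (simp only: power2_norm_eq_inner)
qed

lemma norm_proj_le: "norm (proj V x) \<le> norm x"
proof -
  have "norm (proj V x)^2 \<le> norm x ^2" using proj_pyth[of x] by (simp add: zero_le_power2)
  thus ?thesis by (rule power2_le_imp_le) simp
qed

lemma norm_proj_comp_le: "norm (x - proj V x) \<le> norm x"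
proof -
  have "norm (x - proj V x)^2 \<le> norm x ^2" using proj_pyth[of x] by (simp add: zero_le_power2)
  thus ?thesis by (rule power2_le_imp_le) simp
qed

lemma inner_proj_self: "x \<bullet> proj V x = norm (proj V x)^2"
  using proj_inner[of x x] by (simp add: inner_commute power2_norm_eq_inner)

lemma bl_proj: "bounded_linear (proj V)"
  by (rule bounded_linear_intro[of _ 1]) (auto simp: proj_add proj_scale norm_proj_le)

lemma cont_proj: "continuous_on UNIV (proj V)"
  by (rule linear_continuous_on[OF bl_proj])

lemma cont_projc: "continuous_on UNIV (\<lambda>x. x - proj V x)"
  by (intro continuous_intros cont_proj)


end

lemma subspace_oc: "subspace (oc V)"
  unfolding subspace_def oc_def by (auto simp: inner_add_left)

lemma closed_oc: "closed (oc (V::'a::real_inner set))"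
proof -
  have "oc V = (\<Inter>v\<in>V. {x. x \<bullet> v = 0})" by (auto simp: oc_iff)
  moreover have "closed {x::'a. x \<bullet> v = 0}" for v
    by (intro closed_Collect_eq continuous_intros)
  ultimately show ?thesis by auto
qed

lemma cs_oc: "closed_subspace (oc V)"
  by (simp add: closed_subspace_def subspace_oc closed_oc)

lemma oc_anti: "A \<subseteq> B \<Longrightarrow> oc B \<subseteq> oc A" unfolding oc_def by blast

lemma oc_closure: "oc (closure S) = oc (S::'a::real_inner set)"
proof
  show "oc (closure S) \<subseteq> oc S" by (rule oc_anti[OF closure_subset])
  show "oc S \<subseteq> oc (closure S)"
  proof
    fix x assume x: "x \<in> oc S"
    have c: "closed {y. x \<bullet> y = 0}" by (intro closed_Collect_eq continuous_intros)
    have "S \<subseteq> {y. x \<bullet> y = 0}" using x by (auto simp: oc_iff)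
    hence "closure S \<subseteq> {y. x \<bullet> y = 0}" using c by (rule closure_minimal)
    thus "x \<in> oc (closure S)" by (auto simp: oc_iff)
  qed
qed

lemma oc_oc:
  fixes V :: "'a::{real_inner,complete_space} set"
  assumes cs: "closed_subspace V" shows "oc (oc V) = V"
proof
  show "V \<subseteq> oc (oc V)"
  proof
    fix x assume "x \<in> V"
    show "x \<in> oc (oc V)" unfolding oc_iff
    proof
      fix v assume "v \<in> oc V"
      hence "v \<bullet> x = 0" using \<open>x \<in> V\<close> by (simp add: oc_iff)
      thus "x \<bullet> v = 0" by (simp add: inner_commute)
    qed
  qed
  show "oc (oc V) \<subseteq> V"
  proof
    fix x assume x: "x \<in> oc (oc V)"
    have "x - proj V x \<in> oc V" using proj_orth[OF cs] by (auto simp: oc_iff)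
    hence "x \<bullet> (x - proj V x) = 0" using x by (auto simp: oc_iff)
    moreover have "proj V x \<bullet> (x - proj V x) = 0" by (rule proj_orth'[OF cs proj_in[OF cs]])
    ultimately have "(x - proj V x) \<bullet> (x - proj V x) = 0" by (simp add: inner_diff_left)
    hence "x = proj V x" by simp
    thus "x \<in> V" using proj_in[OF cs] by metis
  qed
qed

lemma proj_oc:
  fixes V :: "'a::{real_inner,complete_space} set"
  assumes cs: "closed_subspace V" shows "proj (oc V) x = x - proj V x"
  by (rule proj_unique[OF cs_oc]) (auto simp: oc_iff proj_orth[OF cs] proj_orth'[OF cs] proj_in[OF cs] inner_commute)

lemma subspace_closure:
  fixes S :: "'a::real_normed_vector set"
  assumes "subspace S" shows "subspace (closure S)"
  unfolding subspace_def
proof (intro conjI ballI allI)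
  show "0 \<in> closure S" using assms closure_subset subspace_0 by blast
next
  fix x y assume "x \<in> closure S" "y \<in> closure S"
  then obtain f g where "\<forall>n. f n \<in> S" "f \<longlonglongrightarrow> x" "\<forall>n. g n \<in> S" "g \<longlonglongrightarrow> y"
    by (meson closure_sequential)
  hence "\<forall>n. f n + g n \<in> S" "(\<lambda>n. f n + g n) \<longlonglongrightarrow> x + y"
    using assms by (auto simp: subspace_add intro: tendsto_add)
  thus "x + y \<in> closure S" unfolding closure_sequential by (intro exI[of _ "\<lambda>n. f n + g n"]) simp
next
  fix c x assume "x \<in> closure S"
  then obtain f where "\<forall>n. f n \<in> S" "f \<longlonglongrightarrow> x" by (meson closure_sequential)
  hence "\<forall>n. c *\<^sub>R f n \<in> S" "(\<lambda>n. c *\<^sub>R f n) \<longlonglongrightarrow> c *\<^sub>R x"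
    using assms by (auto simp: subspace_scale intro: tendsto_scaleR)
  thus "c *\<^sub>R x \<in> closure S" unfolding closure_sequential by (intro exI[of _ "\<lambda>n. c *\<^sub>R f n"]) simp
qed

lemma subspace_ssum:
  assumes A: "subspace A" and B: "subspace B" shows "subspace (ssum A B)"
  unfolding subspace_def
proof (intro conjI ballI allI)
  have "0 + 0 \<in> ssum A B" unfolding ssum_def using A B subspace_0 by blast
  thus "0 \<in> ssum A B" by simp
next
  fix x y assume "x \<in> ssum A B" "y \<in> ssum A B"
  then obtain a b a' b' where ab: "x = a + b" "y = a' + b'" "a \<in> A" "b \<in> B" "a' \<in> A" "b' \<in> B"
    unfolding ssum_def by blast
  have "(a + a') + (b + b') \<in> ssum A B" unfolding ssum_def using ab A B subspace_add by blast
  moreover have "x + y = (a + a') + (b + b')" using ab by (simp add: algebra_simps)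
  ultimately show "x + y \<in> ssum A B" by simp
next
  fix c x assume "x \<in> ssum A B"
  then obtain a b where ab: "x = a + b" "a \<in> A" "b \<in> B" unfolding ssum_def by blast
  have "c *\<^sub>R a + c *\<^sub>R b \<in> ssum A B" unfolding ssum_def using ab A B subspace_scale by blast
  moreover have "c *\<^sub>R x = c *\<^sub>R a + c *\<^sub>R b" using ab by (simp add: scaleR_add_right)
  ultimately show "c *\<^sub>R x \<in> ssum A B" by simp
qed

lemma cs_closure: "subspace S \<Longrightarrow> closed_subspace (closure S)"
  by (simp add: closed_subspace_def subspace_closure)

lemma cs_int: "closed_subspace A \<Longrightarrow> closed_subspace B \<Longrightarrow> closed_subspace (A \<inter> B)"
  by (simp add: closed_subspace_def subspace_inter closed_Int)

lemma ssum_sub1: "subspace B \<Longrightarrow> A \<subseteq> ssum A B"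
  unfolding ssum_def by (force simp: subspace_0)
lemma ssum_sub2: "subspace A \<Longrightarrow> B \<subseteq> ssum A B"
  unfolding ssum_def by (force simp: subspace_0)

lemma oc_ssum:
  assumes A: "subspace A" and B: "subspace B" shows "oc (ssum A B) = oc A \<inter> oc B"
proof
  show "oc (ssum A B) \<subseteq> oc A \<inter> oc B"
    using oc_anti[OF ssum_sub1[OF B]] oc_anti[OF ssum_sub2[OF A]] by blast
  show "oc A \<inter> oc B \<subseteq> oc (ssum A B)"
    unfolding oc_def ssum_def by (auto simp: inner_add_right)
qed




definition Hc :: "'a::real_inner set \<Rightarrow> 'a set \<Rightarrow> real \<Rightarrow> bool" where
  "Hc V W e \<longleftrightarrow> (\<forall>v\<in>V. \<forall>w\<in>W. v \<in> oc (V \<inter> W) \<longrightarrow> w \<in> oc (V \<inter> W) \<longrightarrow> \<bar>v \<bullet> w\<bar> \<le> e * norm v * norm w)"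

lemma HcD: "Hc V W e \<Longrightarrow> v \<in> V \<Longrightarrow> w \<in> W \<Longrightarrow> v \<in> oc (V \<inter> W) \<Longrightarrow> w \<in> oc (V \<inter> W) \<Longrightarrow> \<bar>v \<bullet> w\<bar> \<le> e * norm v * norm w"
  unfolding Hc_def by blast

lemma Hc_sym: "Hc V W e \<Longrightarrow> Hc W V e"
  unfolding Hc_def by (metis inf_commute inner_commute mult.assoc mult.commute)

lemma shrink:
  fixes V W :: "'a::{real_inner,complete_space} set"
  assumes csV: "closed_subspace V" and csW: "closed_subspace W" and H: "Hc V W e" and e: "0 \<le> e"
    and v: "v \<in> V" "v \<in> oc (V \<inter> W)"
  shows "norm (proj W v) \<le> e * norm v"
proof -
  let ?p = "proj W v"
  have pW: "?p \<in> W" by (rule proj_in[OF csW])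
  have "?p \<in> oc (V \<inter> W)"
  proof (unfold oc_iff, intro ballI)
    fix m assume m: "m \<in> V \<inter> W"
    have "?p \<bullet> m = v \<bullet> proj W m" by (rule proj_sym[OF csW])
    also have "\<dots> = v \<bullet> m" using m proj_id[OF csW] by simp
    also have "\<dots> = 0" using v(2) m by (simp add: oc_iff)
    finally show "?p \<bullet> m = 0" .
  qed
  hence "\<bar>v \<bullet> ?p\<bar> \<le> e * norm v * norm ?p" using HcD[OF H v(1) pW v(2)] by blast
  moreover have "v \<bullet> ?p = norm ?p ^2" by (rule inner_proj_self[OF csW])
  ultimately have "norm ?p * norm ?p \<le> (e * norm v) * norm ?p" by (simp add: power2_eq_square)
  thus ?thesis using e
    by (cases "norm ?p = 0") (auto simp: mult_le_cancel_right)
qed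

lemma H_perp:
  fixes V W :: "'a::{real_inner,complete_space} set"
  assumes csV: "closed_subspace V" and csW: "closed_subspace W" and H: "Hc V W e" and e: "0 \<le> e"
    and x: "x \<in> V" "x \<in> oc (V \<inter> W)" and y: "y \<in> W"
  shows "\<bar>x \<bullet> y\<bar> \<le> e * norm x * norm y"
proof -
  have csN: "closed_subspace (V \<inter> W)" by (rule cs_int[OF csV csW])
  let ?y = "y - proj (V \<inter> W) y"
  have yW: "?y \<in> W" using proj_in[OF csN] y csW by (auto simp: closed_subspace_def subspace_diff)
  have yo: "?y \<in> oc (V \<inter> W)" using proj_orth[OF csN] by (auto simp: oc_iff)
  have "x \<bullet> proj (V \<inter> W) y = 0" using x(2) proj_in[OF csN] by (auto simp: oc_iff)
  hence "x \<bullet> y = x \<bullet> ?y" by (simp add: inner_diff_right)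
  hence "\<bar>x \<bullet> y\<bar> \<le> e * norm x * norm ?y" using HcD[OF H x(1) yW x(2) yo] by simp
  also have "\<dots> \<le> e * norm x * norm y" using e by (intro mult_left_mono norm_proj_comp_le[OF csN]) auto
  finally show ?thesis .
qed

lemma Hc_mono: "Hc V W e \<Longrightarrow> e \<le> e' \<Longrightarrow> Hc V W e'"
  unfolding Hc_def by (meson mult_right_mono norm_ge_zero order_trans)

lemma dual_key:
  fixes A B :: "'a::{real_inner,complete_space} set"
  assumes csA: "closed_subspace A" and csB: "closed_subspace B" and H: "Hc A B c"
    and c0: "0 \<le> c" and c1: "c \<le> 1"
    and a: "a \<in> A" "a \<in> oc (A \<inter> B)" and b: "b \<in> B"
  shows "\<bar>(b - proj A b) \<bullet> (a - proj B a)\<bar> \<le> c * norm (b - proj A b) * norm (a - proj B a)"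
proof -
  define b0 where "b0 = proj B a"
  define s where "s = proj A b0"
  have b0c: "norm b0 \<le> c * norm a" unfolding b0_def by (rule shrink[OF csA csB H c0 a])
  have e1: "(b - proj A b) \<bullet> a = 0" using proj_orth[OF csA a(1)] .
  have e2: "(b - proj A b) \<bullet> s = 0" unfolding s_def using proj_orth[OF csA proj_in[OF csA]] .
  have eq: "(b - proj A b) \<bullet> (a - proj B a) = - ((b - proj A b) \<bullet> (b0 - s))"
    using e1 e2 unfolding b0_def by (simp add: inner_diff_right)
  have cs1: "\<bar>(b - proj A b) \<bullet> (b0 - s)\<bar> \<le> norm (b - proj A b) * norm (b0 - s)"
    by (rule Cauchy_Schwarz_ineq2)
  have sa: "s \<bullet> a = norm b0 ^2"
  proof -
    have "s \<bullet> a = b0 \<bullet> proj A a" unfolding s_def by (rule proj_sym[OF csA])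
    also have "\<dots> = b0 \<bullet> a" using proj_id[OF csA a(1)] by simp
    also have "\<dots> = norm b0 ^2" unfolding b0_def using inner_proj_self[OF csB, of a] by (simp add: inner_commute)
    finally show ?thesis .
  qed
  have p1: "norm (b0 - s)^2 = norm b0 ^2 - norm s ^2" using proj_pyth[OF csA, of b0] unfolding s_def by simp
  have p2: "norm (a - b0)^2 = norm a ^2 - norm b0 ^2" using proj_pyth[OF csB, of a] unfolding b0_def by simp
  have sq: "norm (c^2 *\<^sub>R a - s)^2 = c^2 * c^2 * norm a^2 - 2 * c^2 * norm b0^2 + norm s^2"
  proof -
    have "norm (c^2 *\<^sub>R a - s)^2 = c^2 * c^2 * (a \<bullet> a) - 2 * c^2 * (s \<bullet> a) + s \<bullet> s"
      by (simp only: power2_norm_eq_inner) (simp add: inner_diff_left inner_diff_right inner_commute algebra_simps)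
    thus ?thesis using sa by (simp only: power2_norm_eq_inner)
  qed
  have nb: "norm b0^2 \<le> c^2 * norm a^2"
    using b0c by (metis norm_ge_zero power_mono power_mult_distrib)
  have "c^2 * norm (a - b0)^2 - norm (b0 - s)^2 = norm (c^2 *\<^sub>R a - s)^2 + (1 - c^2) * (c^2 * norm a^2 - norm b0^2)"
    unfolding p1 p2 sq by (simp add: algebra_simps power2_eq_square)
  moreover have "0 \<le> (1 - c^2) * (c^2 * norm a^2 - norm b0^2)"
    using nb c0 c1 by (intro mult_nonneg_nonneg) (auto simp: power_le_one)
  moreover have "0 \<le> norm (c^2 *\<^sub>R a - s)^2" by simp
  moreover have "(c * norm (a - b0))^2 = c^2 * norm (a - b0)^2" by (simp add: power_mult_distrib)
  ultimately have "norm (b0 - s)^2 \<le> (c * norm (a - b0))^2" by linarith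
  hence le: "norm (b0 - s) \<le> c * norm (a - b0)"
    by (rule power2_le_imp_le) (use c0 in simp)
  have "\<bar>(b - proj A b) \<bullet> (a - proj B a)\<bar> \<le> norm (b - proj A b) * norm (b0 - s)" using eq cs1 by simp
  also have "\<dots> \<le> norm (b - proj A b) * (c * norm (a - b0))" by (intro mult_left_mono le) auto
  finally show ?thesis by (simp add: b0_def ac_simps)
qed




lemma Hc_dual:
  fixes A B :: "'a::{real_inner,complete_space} set"
  assumes csA: "closed_subspace A" and csB: "closed_subspace B" and H: "Hc A B c" and c0: "0 \<le> c"
  shows "Hc (oc A) (oc B) c"
proof (cases "c \<le> 1")
  case False
  show ?thesis unfolding Hc_def
  proof (intro ballI impI)
    fix u v :: 'a
    have "\<bar>u \<bullet> v\<bar> \<le> 1 * norm u * norm v" using Cauchy_Schwarz_ineq2 by simp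
    also have "\<dots> \<le> c * norm u * norm v" using False by (intro mult_right_mono) auto
    finally show "\<bar>u \<bullet> v\<bar> \<le> c * norm u * norm v" .
  qed
next
  case c1: True
  define M where "M = A \<inter> B"
  define C where "C = closure (ssum A B)"
  have sA: "subspace A" and sB: "subspace B" using csA csB by (auto simp: closed_subspace_def)
  have csM: "closed_subspace M" unfolding M_def by (rule cs_int[OF csA csB])
  have csC: "closed_subspace C" unfolding C_def by (rule cs_closure[OF subspace_ssum[OF sA sB]])
  have ocC: "oc C = oc A \<inter> oc B" unfolding C_def oc_closure by (rule oc_ssum[OF sA sB])
  have inC: "u \<in> C" if "u \<in> oc (oc A \<inter> oc B)" for u
    using that oc_oc[OF csC] ocC by simp
  have contA: "continuous_on UNIV (\<lambda>z. z - proj A z)" by (rule cont_projc[OF csA])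
  have contB: "continuous_on UNIV (\<lambda>z. z - proj B z)" by (rule cont_projc[OF csB])
  have projA_sum: "z - proj A z = b - proj A b" if "z = a + b" "a \<in> A" for z a b
    using that proj_add[OF csA] proj_id[OF csA] by simp
  have projB_sum: "z - proj B z = a - proj B a" if "z = a + b" "b \<in> B" for z a b
    using that proj_add[OF csB] proj_id[OF csB] by simp
  have st1: "\<bar>u \<bullet> (a - proj B a)\<bar> \<le> c * norm u * norm (a - proj B a)"
    if u: "u \<in> oc A" "u \<in> C" and a: "a \<in> A" "a \<in> oc M" for u a
  proof -
    have "C \<subseteq> {z. \<bar>(z - proj A z) \<bullet> (a - proj B a)\<bar> \<le> c * norm (z - proj A z) * norm (a - proj B a)}"
      unfolding C_def
    proof (rule closure_minimal)
      show "closed {z. \<bar>(z - proj A z) \<bullet> (a - proj B a)\<bar> \<le> c * norm (z - proj A z) * norm (a - proj B a)}"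
        by (intro closed_Collect_le continuous_intros continuous_on_compose2[OF contA]) auto
      show "ssum A B \<subseteq> {z. \<bar>(z - proj A z) \<bullet> (a - proj B a)\<bar> \<le> c * norm (z - proj A z) * norm (a - proj B a)}"
      proof
        fix z assume "z \<in> ssum A B"
        then obtain a' b where z: "z = a' + b" "a' \<in> A" "b \<in> B" unfolding ssum_def by blast
        show "z \<in> {z. \<bar>(z - proj A z) \<bullet> (a - proj B a)\<bar> \<le> c * norm (z - proj A z) * norm (a - proj B a)}"
          using dual_key[OF csA csB H c0 c1 a(1) _ z(3)] a(2) projA_sum[OF z(1,2)] unfolding M_def by simp
      qed
    qed
    moreover have "u - proj A u = u" using proj_zero[OF csA u(1)] by simp
    ultimately show ?thesis using u(2) by force
  qed
  show ?thesis unfolding Hc_def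
  proof (intro ballI impI)
    fix u v assume u: "u \<in> oc A" and v: "v \<in> oc B" and uo: "u \<in> oc (oc A \<inter> oc B)" and vo: "v \<in> oc (oc A \<inter> oc B)"
    have uC: "u \<in> C" by (rule inC[OF uo])
    have vC: "v \<in> C" by (rule inC[OF vo])
    have "C \<subseteq> {z. \<bar>u \<bullet> (z - proj B z)\<bar> \<le> c * norm u * norm (z - proj B z)}"
      unfolding C_def
    proof (rule closure_minimal)
      show "closed {z. \<bar>u \<bullet> (z - proj B z)\<bar> \<le> c * norm u * norm (z - proj B z)}"
        by (intro closed_Collect_le continuous_intros continuous_on_compose2[OF contB]) auto
      show "ssum A B \<subseteq> {z. \<bar>u \<bullet> (z - proj B z)\<bar> \<le> c * norm u * norm (z - proj B z)}"
      proof
        fix z assume "z \<in> ssum A B"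
        then obtain a b where z: "z = a + b" "a \<in> A" "b \<in> B" unfolding ssum_def by blast
        define a1 where "a1 = a - proj M a"
        have MA: "proj M a \<in> A" "proj M a \<in> B" using proj_in[OF csM] unfolding M_def by auto
        have a1A: "a1 \<in> A" unfolding a1_def using z(2) MA sA by (simp add: subspace_diff)
        have a1M: "a1 \<in> oc M" unfolding a1_def using proj_orth[OF csM] by (auto simp: oc_iff)
        have "a1 - proj B a1 = a - proj B a"
          unfolding a1_def using proj_diff[OF csB] proj_id[OF csB MA(2)] by simp
        thus "z \<in> {z. \<bar>u \<bullet> (z - proj B z)\<bar> \<le> c * norm u * norm (z - proj B z)}"
          using st1[OF u uC a1A a1M] projB_sum[OF z(1,3)] by simp
      qed
    qed
    moreover have "v - proj B v = v" using proj_zero[OF csB v] by simp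
    ultimately show "\<bar>u \<bullet> v\<bar> \<le> c * norm u * norm v" using vC by force
  qed
qed




lemma core_a:
  fixes V1 V2 V3 :: "'a::{real_inner,complete_space} set"
  assumes cs1: "closed_subspace V1" and cs2: "closed_subspace V2" and cs3: "closed_subspace V3"
    and H12: "Hc V1 V2 e12" and H13: "Hc V1 V3 e13" and H23: "Hc V2 V3 e23"
    and e12: "0 \<le> e12" and e13: "0 \<le> e13" "e13 < 1" and e23: "0 \<le> e23" "e23 < 1"
  shows "Hc (closure (ssum V1 V3)) (closure (ssum V2 V3))
           ((e12 + e13 * e23) / (sqrt (1 - e13^2) * sqrt (1 - e23^2)))"
proof -
  define N where "N = V1 \<inter> V2"
  define A where "A = V1 \<inter> V3"
  define B where "B = V2 \<inter> V3"
  define L where "L = closure (ssum N A)"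
  define Q where "Q = (\<lambda>x. x - proj V3 x)"
  define s13 where "s13 = sqrt (1 - e13^2)"
  define s23 where "s23 = sqrt (1 - e23^2)"
  define K where "K = e12 + e13 * e23"
  define R where "R = K / (s13 * s23)"
  have s1: "subspace V1" and s2: "subspace V2" and s3: "subspace V3"
    using cs1 cs2 cs3 by (auto simp: closed_subspace_def)
  have csN: "closed_subspace N" unfolding N_def by (rule cs_int[OF cs1 cs2])
  have csA: "closed_subspace A" unfolding A_def by (rule cs_int[OF cs1 cs3])
  have csB: "closed_subspace B" unfolding B_def by (rule cs_int[OF cs2 cs3])
  have sN: "subspace N" and sA: "subspace A" using csN csA by (auto simp: closed_subspace_def)
  have csL: "closed_subspace L" unfolding L_def by (rule cs_closure[OF subspace_ssum[OF sN sA]])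
  have LV1: "L \<subseteq> V1"
  proof -
    have "ssum N A \<subseteq> V1" unfolding ssum_def N_def A_def using s1 subspace_add by blast
    thus ?thesis unfolding L_def using cs1 by (intro closure_minimal) (auto simp: closed_subspace_def)
  qed
  have NL: "N \<subseteq> L" unfolding L_def using ssum_sub1[OF sA] closure_subset by blast
  have AL: "A \<subseteq> L" unfolding L_def using ssum_sub2[OF sN] closure_subset by blast
  have K0: "0 \<le> K" unfolding K_def using e12 e13 e23 by simp
  have e13s: "e13^2 < 1" using e13 by (simp add: abs_square_less_1)
  have e23s: "e23^2 < 1" using e23 by (simp add: abs_square_less_1)
  have s13p: "0 < s13" unfolding s13_def using e13s by simp
  have s23p: "0 < s23" unfolding s23_def using e23s by simp
  have s13sq: "s13^2 = 1 - e13^2" unfolding s13_def using e13s by simp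
  have s23sq: "s23^2 = 1 - e23^2" unfolding s23_def using e23s by simp
  have R0: "0 \<le> R" unfolding R_def using K0 s13p s23p by simp
  have RK: "R * (s13 * s23) = K" unfolding R_def using s13p s23p by simp
  have contQ: "continuous_on UNIV Q" unfolding Q_def by (rule cont_projc[OF cs3])
  have Q_V3: "Q v = 0" if "v \<in> V3" for v unfolding Q_def using proj_id[OF cs3 that] by simp
  have Q_add: "Q (z + w) = Q z + Q w" for z w unfolding Q_def using proj_add[OF cs3] by simp
  have Q_diff: "Q (z - w) = Q z - Q w" for z w unfolding Q_def using proj_diff[OF cs3] by simp
  have Q_oc: "Q w = w" if "w \<in> oc V3" for w unfolding Q_def using proj_zero[OF cs3 that] by simp
  have low: "s * norm x \<le> norm (Q x)"
    if H: "Hc V V3 e" and csV: "closed_subspace V" and e: "0 \<le> e" and x: "x \<in> V" "x \<in> oc (V \<inter> V3)"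
      and s: "s = sqrt (1 - e^2)" and es: "e^2 < 1" for V e s x
  proof -
    have p: "norm (proj V3 x) \<le> e * norm x" by (rule shrink[OF csV cs3 H e x])
    have py: "norm x ^2 = norm (proj V3 x)^2 + norm (Q x)^2" unfolding Q_def by (rule proj_pyth[OF cs3])
    have "norm (proj V3 x)^2 \<le> (e * norm x)^2" using p by (intro power_mono) auto
    hence "(1 - e^2) * norm x^2 \<le> norm (Q x)^2" using py by (simp add: power_mult_distrib algebra_simps)
    moreover have "(s * norm x)^2 = (1 - e^2) * norm x^2" unfolding s using es by (simp add: power_mult_distrib)
    ultimately have "(s * norm x)^2 \<le> norm (Q x)^2" by simp
    thus ?thesis by (rule power2_le_imp_le) simp
  qed
  have low1: "s13 * norm x \<le> norm (Q x)" if "x \<in> V1" "x \<in> oc A" for x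
    using low[OF H13 cs1 e13(1) that[unfolded A_def] s13_def e13s] .
  have low2: "s23 * norm y \<le> norm (Q y)" if "y \<in> V2" "y \<in> oc B" for y
    using low[OF H23 cs2 e23(1) that[unfolded B_def] s23_def e23s] .
  have C1: "\<bar>(x - proj L x) \<bullet> Q y\<bar> \<le> K * norm x * norm y"
    if x: "x \<in> V1" and y: "y \<in> V2" "y \<in> oc B" for x y
  proof -
    define xs where "xs = x - proj L x"
    have xsV1: "xs \<in> V1" unfolding xs_def using x proj_in[OF csL, of x] LV1 s1 subspace_diff by blast
    have xsL: "xs \<in> oc L" unfolding xs_def using proj_orth[OF csL] by (auto simp: oc_iff)
    have xsN: "xs \<in> oc (V1 \<inter> V2)" using xsL oc_anti[OF NL] unfolding N_def by blast
    have xsA: "xs \<in> oc (V1 \<inter> V3)" using xsL oc_anti[OF AL] unfolding A_def by blast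
    have eq: "xs \<bullet> Q y = xs \<bullet> y - proj V3 xs \<bullet> proj V3 y"
    proof -
      have "xs \<bullet> proj V3 y = proj V3 xs \<bullet> y" using proj_sym[OF cs3, of xs y] by simp
      also have "\<dots> = proj V3 xs \<bullet> proj V3 y" by (rule proj_inner[OF cs3])
      finally show ?thesis unfolding Q_def by (simp add: inner_diff_right)
    qed
    have t1: "\<bar>xs \<bullet> y\<bar> \<le> e12 * norm xs * norm y" by (rule H_perp[OF cs1 cs2 H12 e12 xsV1 xsN y(1)])
    have p1: "norm (proj V3 xs) \<le> e13 * norm xs" by (rule shrink[OF cs1 cs3 H13 e13(1) xsV1 xsA])
    have p2: "norm (proj V3 y) \<le> e23 * norm y" by (rule shrink[OF cs2 cs3 H23 e23(1) y(1)]) (use y(2) in \<open>simp add: B_def\<close>)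
    have "\<bar>proj V3 xs \<bullet> proj V3 y\<bar> \<le> norm (proj V3 xs) * norm (proj V3 y)" by (rule Cauchy_Schwarz_ineq2)
    also have "\<dots> \<le> (e13 * norm xs) * (e23 * norm y)" using p1 p2 e13 by (intro mult_mono) auto
    finally have t2: "\<bar>proj V3 xs \<bullet> proj V3 y\<bar> \<le> e13 * e23 * norm xs * norm y" by (simp add: ac_simps)
    have "\<bar>xs \<bullet> Q y\<bar> \<le> e12 * norm xs * norm y + e13 * e23 * norm xs * norm y"
      using eq t1 t2 by linarith
    also have "\<dots> = K * (norm xs * norm y)" unfolding K_def by (simp add: algebra_simps)
    also have "\<dots> \<le> K * (norm x * norm y)" unfolding xs_def
      using K0 norm_proj_comp_le[OF csL, of x] by (intro mult_left_mono mult_right_mono) auto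
    finally show ?thesis unfolding xs_def by (simp add: ac_simps)
  qed
  have C2: "\<bar>Q x \<bullet> w2\<bar> \<le> R * norm (Q x) * norm w2"
    if x: "x \<in> V1" and w2: "w2 \<in> closure (ssum V2 V3)" "w2 \<in> oc V3" "w2 \<in> oc N" for x w2
  proof -
    define x1 where "x1 = x - proj A x"
    define xs where "xs = x1 - proj L x1"
    have pA: "proj A x \<in> V1" "proj A x \<in> V3" using proj_in[OF csA] unfolding A_def by auto
    have x1V1: "x1 \<in> V1" unfolding x1_def using x pA s1 by (simp add: subspace_diff)
    have x1A: "x1 \<in> oc A" unfolding x1_def using proj_orth[OF csA] by (auto simp: oc_iff)
    have Qx1: "Q x1 = Q x" unfolding x1_def using Q_diff Q_V3[OF pA(2)] by simp
    have w2A: "w2 \<in> oc A" using w2(2) oc_anti[of A V3] unfolding A_def by blast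
    have w2L: "w2 \<in> oc L" unfolding L_def oc_closure oc_ssum[OF sN sA] using w2A w2(3) by blast
    have eq: "Q x \<bullet> w2 = xs \<bullet> w2"
    proof -
      have "w2 \<bullet> proj V3 x1 = 0" using w2(2) proj_in[OF cs3, of x1] unfolding oc_iff by blast
      hence "proj V3 x1 \<bullet> w2 = 0" by (simp add: inner_commute)
      moreover have "Q x1 \<bullet> w2 = x1 \<bullet> w2 - proj V3 x1 \<bullet> w2" unfolding Q_def by (simp add: inner_diff_left)
      ultimately have "Q x \<bullet> w2 = x1 \<bullet> w2" using Qx1 by simp
      moreover have "w2 \<bullet> proj L x1 = 0" using w2L proj_in[OF csL, of x1] unfolding oc_iff by blast
      hence "proj L x1 \<bullet> w2 = 0" by (simp add: inner_commute)
      ultimately show ?thesis unfolding xs_def using \<open>proj L x1 \<bullet> w2 = 0\<close> by (simp add: inner_diff_left)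
    qed
    have "closure (ssum V2 V3) \<subseteq> {z. \<bar>xs \<bullet> Q z\<bar> \<le> R * norm (Q x) * norm (Q z)}"
    proof (rule closure_minimal)
      show "closed {z. \<bar>xs \<bullet> Q z\<bar> \<le> R * norm (Q x) * norm (Q z)}"
        by (intro closed_Collect_le continuous_intros continuous_on_compose2[OF contQ]) auto
      show "ssum V2 V3 \<subseteq> {z. \<bar>xs \<bullet> Q z\<bar> \<le> R * norm (Q x) * norm (Q z)}"
      proof
        fix z assume "z \<in> ssum V2 V3"
        then obtain y v where z: "z = y + v" "y \<in> V2" "v \<in> V3" unfolding ssum_def by blast
        define y1 where "y1 = y - proj B y"
        have pB: "proj B y \<in> V2" "proj B y \<in> V3" using proj_in[OF csB] unfolding B_def by auto
        have y1V2: "y1 \<in> V2" unfolding y1_def using z(2) pB s2 by (simp add: subspace_diff)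
        have y1B: "y1 \<in> oc B" unfolding y1_def using proj_orth[OF csB] by (auto simp: oc_iff)
        have Qz: "Q z = Q y1" unfolding y1_def using Q_diff Q_add z(1) Q_V3[OF pB(2)] Q_V3[OF z(3)] by simp
        have c1: "\<bar>xs \<bullet> Q y1\<bar> \<le> K * norm x1 * norm y1" unfolding xs_def by (rule C1[OF x1V1 y1V2 y1B])
        have l1: "s13 * norm x1 \<le> norm (Q x)" using low1[OF x1V1 x1A] Qx1 by simp
        have l2: "s23 * norm y1 \<le> norm (Q y1)" by (rule low2[OF y1V2 y1B])
        have "K * norm x1 * norm y1 = R * ((s13 * norm x1) * (s23 * norm y1))" using RK by (simp add: algebra_simps)
        also have "\<dots> \<le> R * (norm (Q x) * norm (Q y1))" using l1 l2 R0 s13p s23p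
          by (intro mult_left_mono mult_mono) auto
        finally have "\<bar>xs \<bullet> Q y1\<bar> \<le> R * norm (Q x) * norm (Q y1)" using c1 by (simp add: ac_simps)
        thus "z \<in> {z. \<bar>xs \<bullet> Q z\<bar> \<le> R * norm (Q x) * norm (Q z)}" using Qz by simp
      qed
    qed
    hence "\<bar>xs \<bullet> Q w2\<bar> \<le> R * norm (Q x) * norm (Q w2)" using w2(1) by blast
    thus ?thesis using eq Q_oc[OF w2(2)] by simp
  qed
  show ?thesis unfolding Hc_def R_def[symmetric, unfolded K_def s13_def s23_def]
  proof (intro ballI impI)
    fix w1 w2
    assume w1: "w1 \<in> closure (ssum V1 V3)" and w2: "w2 \<in> closure (ssum V2 V3)"
      and o1: "w1 \<in> oc (closure (ssum V1 V3) \<inter> closure (ssum V2 V3))"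
      and o2: "w2 \<in> oc (closure (ssum V1 V3) \<inter> closure (ssum V2 V3))"
    have V3W: "V3 \<subseteq> closure (ssum V1 V3) \<inter> closure (ssum V2 V3)"
      using ssum_sub2[OF s1] ssum_sub2[OF s2] closure_subset by blast
    have NW: "N \<subseteq> closure (ssum V1 V3) \<inter> closure (ssum V2 V3)"
      using ssum_sub1[OF s3, of V1] ssum_sub1[OF s3, of V2] closure_subset unfolding N_def by blast
    have w13: "w1 \<in> oc V3" using o1 oc_anti[OF V3W] by blast
    have w23: "w2 \<in> oc V3" using o2 oc_anti[OF V3W] by blast
    have w2N: "w2 \<in> oc N" using o2 oc_anti[OF NW] by blast
    have "closure (ssum V1 V3) \<subseteq> {z. \<bar>Q z \<bullet> w2\<bar> \<le> R * norm (Q z) * norm w2}"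
    proof (rule closure_minimal)
      show "closed {z. \<bar>Q z \<bullet> w2\<bar> \<le> R * norm (Q z) * norm w2}"
        by (intro closed_Collect_le continuous_intros continuous_on_compose2[OF contQ]) auto
      show "ssum V1 V3 \<subseteq> {z. \<bar>Q z \<bullet> w2\<bar> \<le> R * norm (Q z) * norm w2}"
      proof
        fix z assume "z \<in> ssum V1 V3"
        then obtain x v where z: "z = x + v" "x \<in> V1" "v \<in> V3" unfolding ssum_def by blast
        have "Q z = Q x" using z(1) Q_add Q_V3[OF z(3)] by simp
        thus "z \<in> {z. \<bar>Q z \<bullet> w2\<bar> \<le> R * norm (Q z) * norm w2}" using C2[OF z(2) w2 w23 w2N] by simp
      qed
    qed
    hence "\<bar>Q w1 \<bullet> w2\<bar> \<le> R * norm (Q w1) * norm w2" using w1 by blast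
    thus "\<bar>w1 \<bullet> w2\<bar> \<le> R * norm w1 * norm w2" using Q_oc[OF w13] by simp
  qed
qed




lemma unit_exists:
  fixes V W :: "'a::{real_inner,complete_space} set"
  assumes csV: "closed_subspace V" and csW: "closed_subspace W" and nc: "\<not> V \<subseteq> W"
  shows "\<exists>u. u \<in> V \<and> norm u = 1 \<and> u \<in> oc (V \<inter> W)"
proof -
  have csM: "closed_subspace (V \<inter> W)" by (rule cs_int[OF csV csW])
  have sV: "subspace V" using csV by (simp add: closed_subspace_def)
  obtain v where v: "v \<in> V" "v \<notin> W" using nc by blast
  define w where "w = v - proj (V \<inter> W) v"
  have pM: "proj (V \<inter> W) v \<in> V \<inter> W" by (rule proj_in[OF csM])
  have wV: "w \<in> V" unfolding w_def using v(1) pM sV by (simp add: subspace_diff)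
  have wo: "w \<in> oc (V \<inter> W)" unfolding w_def using proj_orth[OF csM] by (auto simp: oc_iff)
  have w0: "w \<noteq> 0" using v(2) pM unfolding w_def by auto
  define u where "u = (1 / norm w) *\<^sub>R w"
  have "u \<in> V" unfolding u_def using wV sV by (simp add: subspace_scale)
  moreover have "norm u = 1" unfolding u_def using w0 by simp
  moreover have "u \<in> oc (V \<inter> W)" unfolding u_def using wo by (auto simp: oc_iff)
  ultimately show ?thesis by blast
qed

lemma fc_facts:
  fixes V W :: "'a::{real_inner,complete_space} set"
  assumes csV: "closed_subspace V" and csW: "closed_subspace W" and nc: "\<not> V \<subseteq> W" "\<not> W \<subseteq> V"
  shows "0 \<le> friedrichs_cos V W" "friedrichs_cos V W \<le> 1" "Hc V W (friedrichs_cos V W)"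
    "\<And>e. Hc V W e \<Longrightarrow> friedrichs_cos V W \<le> e"
proof -
  define S where "S = {\<bar>w1 \<bullet> w2\<bar> | w1 w2.
       w1 \<in> V \<and> w2 \<in> W \<and> norm w1 = 1 \<and> norm w2 = 1 \<and>
       (\<forall>x \<in> V \<inter> W. w1 \<bullet> x = 0) \<and> (\<forall>x \<in> V \<inter> W. w2 \<bullet> x = 0)}"
  have fc: "friedrichs_cos V W = Sup S" unfolding S_def friedrichs_cos_def ..
  obtain u1 where u1: "u1 \<in> V" "norm u1 = 1" "u1 \<in> oc (V \<inter> W)" using unit_exists[OF csV csW nc(1)] by blast
  obtain u2 where u2: "u2 \<in> W" "norm u2 = 1" "u2 \<in> oc (W \<inter> V)" using unit_exists[OF csW csV nc(2)] by blast
  have u12: "\<bar>u1 \<bullet> u2\<bar> \<in> S" unfolding S_def using u1 u2 by (auto simp: oc_iff Int_commute)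
  have S1: "s \<le> 1" if sS: "s \<in> S" for s
  proof -
    obtain w1 w2 where "s = \<bar>w1 \<bullet> w2\<bar>" "w1 \<in> V" "w2 \<in> W" "norm w1 = 1" "norm w2 = 1"
      "\<forall>x \<in> V \<inter> W. w1 \<bullet> x = 0" "\<forall>x \<in> V \<inter> W. w2 \<bullet> x = 0" using sS unfolding S_def by blast
    thus ?thesis using Cauchy_Schwarz_ineq2[of w1 w2] by simp
  qed
  have bS: "bdd_above S" using S1 by (rule bdd_aboveI)
  have Sne: "S \<noteq> {}" using u12 by blast
  show f0: "0 \<le> friedrichs_cos V W" unfolding fc
    using cSup_upper[OF u12 bS] by (meson abs_ge_zero order_trans)
  show "friedrichs_cos V W \<le> 1" unfolding fc using S1 Sne by (intro cSup_least) auto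
  show "Hc V W (friedrichs_cos V W)" unfolding Hc_def
  proof (intro ballI impI)
    fix v w assume v: "v \<in> V" and w: "w \<in> W" and vo: "v \<in> oc (V \<inter> W)" and wo: "w \<in> oc (V \<inter> W)"
    show "\<bar>v \<bullet> w\<bar> \<le> friedrichs_cos V W * norm v * norm w"
    proof (cases "v = 0 \<or> w = 0")
      case True thus ?thesis by auto
    next
      case False
      define a where "a = (1 / norm v) *\<^sub>R v"
      define b where "b = (1 / norm w) *\<^sub>R w"
      have sV: "subspace V" and sW: "subspace W" using csV csW by (auto simp: closed_subspace_def)
      have aV: "a \<in> V" unfolding a_def using v sV by (simp add: subspace_scale)
      have bW: "b \<in> W" unfolding b_def using w sW by (simp add: subspace_scale)
      have na: "norm a = 1" unfolding a_def using False by simp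
      have nb: "norm b = 1" unfolding b_def using False by simp
      have ao: "\<forall>x \<in> V \<inter> W. a \<bullet> x = 0" unfolding a_def using vo by (simp add: oc_iff)
      have bo: "\<forall>x \<in> V \<inter> W. b \<bullet> x = 0" unfolding b_def using wo by (simp add: oc_iff)
      have "\<bar>a \<bullet> b\<bar> \<in> S" unfolding S_def using aV bW na nb ao bo by blast
      hence le: "\<bar>a \<bullet> b\<bar> \<le> friedrichs_cos V W" unfolding fc using bS by (rule cSup_upper)
      have "\<bar>v \<bullet> w\<bar> = norm v * norm w * \<bar>a \<bullet> b\<bar>" unfolding a_def b_def using False
        by (simp add: abs_mult)
      also have "\<dots> \<le> norm v * norm w * friedrichs_cos V W" using le by (intro mult_left_mono) auto
      finally show ?thesis by (simp add: ac_simps)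
    qed
  qed
  show "friedrichs_cos V W \<le> e" if H: "Hc V W e" for e
    unfolding fc
  proof (rule cSup_least[OF Sne])
    fix s assume "s \<in> S"
    then obtain w1 w2 where s: "s = \<bar>w1 \<bullet> w2\<bar>" "w1 \<in> V" "w2 \<in> W" "norm w1 = 1" "norm w2 = 1"
      "\<forall>x \<in> V \<inter> W. w1 \<bullet> x = 0" "\<forall>x \<in> V \<inter> W. w2 \<bullet> x = 0" unfolding S_def by blast
    show "s \<le> e" using HcD[OF H s(2,3)] s by (simp add: oc_iff)
  qed
qed




theorem lemma4p2:
  fixes V1 V2 V3 :: "'a::{real_inner, complete_space} set"
    and a12 a13 a23 :: real
  assumes cs: "closed_subspace V1" "closed_subspace V2" "closed_subspace V3"
    and nc12: "\<not> V1 \<subseteq> V2" "\<not> V2 \<subseteq> V1"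
    and nc13: "\<not> V1 \<subseteq> V3" "\<not> V3 \<subseteq> V1"
    and nc23: "\<not> V2 \<subseteq> V3" "\<not> V3 \<subseteq> V2"
    and a12: "0 < a12" "a12 \<le> friedrichs_angle V1 V2"
    and a13: "0 < a13" "a13 \<le> friedrichs_angle V1 V3"
    and a23: "0 < a23" "a23 \<le> friedrichs_angle V2 V3"
  shows
    "(\<not> closure (ssum V1 V3) \<subseteq> closure (ssum V2 V3) \<and>
      \<not> closure (ssum V2 V3) \<subseteq> closure (ssum V1 V3) \<longrightarrow>
      friedrichs_cos (closure (ssum V1 V3)) (closure (ssum V2 V3))
        \<le> (cos a12 + cos a13 * cos a23) / (sqrt (1 - (cos a13)\<^sup>2) * sqrt (1 - (cos a23)\<^sup>2)))
   \<and> (\<not> V1 \<inter> V3 \<subseteq> V2 \<inter> V3 \<and> \<not> V2 \<inter> V3 \<subseteq> V1 \<inter> V3 \<longrightarrow>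
      friedrichs_cos (V1 \<inter> V3) (V2 \<inter> V3)
        \<le> (cos a12 + cos a13 * cos a23) / (sqrt (1 - (cos a13)\<^sup>2) * sqrt (1 - (cos a23)\<^sup>2)))"
proof -
  have ang: "friedrichs_cos V W \<le> cos a" "0 \<le> friedrichs_cos V W" "Hc V W (cos a)"
    if csV: "closed_subspace V" and csW: "closed_subspace W" and nc: "\<not> V \<subseteq> W" "\<not> W \<subseteq> V"
      and a: "0 < a" "a \<le> friedrichs_angle V W" for V W :: "'a set" and a
  proof -
    note f = fc_facts[OF csV csW nc]
    have m1: "-1 \<le> friedrichs_cos V W" using f(1) by simp
    have "a \<le> arccos (friedrichs_cos V W)" using a(2) unfolding friedrichs_angle_def .
    moreover have "arccos (friedrichs_cos V W) \<le> pi" by (rule arccos_ubound[OF m1 f(2)])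
    moreover have "0 \<le> arccos (friedrichs_cos V W)" by (rule arccos_lbound[OF m1 f(2)])
    ultimately have "cos (arccos (friedrichs_cos V W)) \<le> cos a"
      using a(1) by (subst cos_mono_le_eq) auto
    thus c: "friedrichs_cos V W \<le> cos a" using m1 f(2) by simp
    show "0 \<le> friedrichs_cos V W" by (rule f(1))
    show "Hc V W (cos a)" using Hc_mono[OF f(3) c] .
  qed
  have lt1: "cos a < 1" if "0 < a" "a \<le> pi" for a :: real
    using cos_mono_less_eq[of a 0] that by simp
  have api: "a \<le> pi" if csV: "closed_subspace V" and csW: "closed_subspace W" and nc: "\<not> V \<subseteq> W" "\<not> W \<subseteq> V"
      and a: "a \<le> friedrichs_angle V W" for V W :: "'a set" and a
  proof -
    note f = fc_facts[OF csV csW nc]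
    have "arccos (friedrichs_cos V W) \<le> pi" using f(1,2) by (intro arccos_ubound) auto
    thus ?thesis using a unfolding friedrichs_angle_def by linarith
  qed
  note A12 = ang[OF cs(1,2) nc12 a12] and A13 = ang[OF cs(1,3) nc13 a13] and A23 = ang[OF cs(2,3) nc23 a23]
  have c13: "cos a13 < 1" using lt1[OF a13(1) api[OF cs(1,3) nc13 a13(2)]] .
  have c23: "cos a23 < 1" using lt1[OF a23(1) api[OF cs(2,3) nc23 a23(2)]] .
  have e12: "0 \<le> cos a12" using A12 by linarith
  have e13: "0 \<le> cos a13" using A13 by linarith
  have e23: "0 \<le> cos a23" using A23 by linarith
  define R where "R = (cos a12 + cos a13 * cos a23) / (sqrt (1 - (cos a13)\<^sup>2) * sqrt (1 - (cos a23)\<^sup>2))"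
  have q13: "(cos a13)\<^sup>2 \<le> 1" by (simp add: abs_square_le_1 abs_cos_le_one)
  have q23: "(cos a23)\<^sup>2 \<le> 1" by (simp add: abs_square_le_1 abs_cos_le_one)
  have R0: "0 \<le> R" unfolding R_def using e12 e13 e23 q13 q23
    by (intro divide_nonneg_nonneg mult_nonneg_nonneg add_nonneg_nonneg real_sqrt_ge_zero) auto
  have s: "subspace V1" "subspace V2" "subspace V3" using cs by (auto simp: closed_subspace_def)
  have partA: "\<not> closure (ssum V1 V3) \<subseteq> closure (ssum V2 V3) \<and>
      \<not> closure (ssum V2 V3) \<subseteq> closure (ssum V1 V3) \<longrightarrow>
      friedrichs_cos (closure (ssum V1 V3)) (closure (ssum V2 V3)) \<le> R"
  proof
    assume nc: "\<not> closure (ssum V1 V3) \<subseteq> closure (ssum V2 V3) \<and> \<not> closure (ssum V2 V3) \<subseteq> closure (ssum V1 V3)"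
    have H: "Hc (closure (ssum V1 V3)) (closure (ssum V2 V3)) R" unfolding R_def
      by (rule core_a[OF cs A12(3) A13(3) A23(3) e12 e13 c13 e23 c23])
    show "friedrichs_cos (closure (ssum V1 V3)) (closure (ssum V2 V3)) \<le> R"
      by (rule fc_facts(4)[OF cs_closure[OF subspace_ssum[OF s(1,3)]] cs_closure[OF subspace_ssum[OF s(2,3)]] nc[THEN conjunct1] nc[THEN conjunct2] H])
  qed
  have partB: "\<not> V1 \<inter> V3 \<subseteq> V2 \<inter> V3 \<and> \<not> V2 \<inter> V3 \<subseteq> V1 \<inter> V3 \<longrightarrow>
      friedrichs_cos (V1 \<inter> V3) (V2 \<inter> V3) \<le> R"
  proof
    assume nc: "\<not> V1 \<inter> V3 \<subseteq> V2 \<inter> V3 \<and> \<not> V2 \<inter> V3 \<subseteq> V1 \<inter> V3"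
    have U12: "Hc (oc V1) (oc V2) (cos a12)" by (rule Hc_dual[OF cs(1,2) A12(3) e12])
    have U13: "Hc (oc V1) (oc V3) (cos a13)" by (rule Hc_dual[OF cs(1,3) A13(3) e13])
    have U23: "Hc (oc V2) (oc V3) (cos a23)" by (rule Hc_dual[OF cs(2,3) A23(3) e23])
    have HU: "Hc (closure (ssum (oc V1) (oc V3))) (closure (ssum (oc V2) (oc V3))) R" unfolding R_def
      by (rule core_a[OF cs_oc cs_oc cs_oc U12 U13 U23 e12 e13 c13 e23 c23])
    have HV: "Hc (oc (closure (ssum (oc V1) (oc V3)))) (oc (closure (ssum (oc V2) (oc V3)))) R"
      by (rule Hc_dual[OF cs_closure[OF subspace_ssum[OF subspace_oc subspace_oc]] cs_closure[OF subspace_ssum[OF subspace_oc subspace_oc]] HU R0])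
    have eq1: "oc (closure (ssum (oc V1) (oc V3))) = V1 \<inter> V3"
      unfolding oc_closure oc_ssum[OF subspace_oc subspace_oc] oc_oc[OF cs(1)] oc_oc[OF cs(3)] ..
    have eq2: "oc (closure (ssum (oc V2) (oc V3))) = V2 \<inter> V3"
      unfolding oc_closure oc_ssum[OF subspace_oc subspace_oc] oc_oc[OF cs(2)] oc_oc[OF cs(3)] ..
    show "friedrichs_cos (V1 \<inter> V3) (V2 \<inter> V3) \<le> R"
      by (rule fc_facts(4)[OF cs_int[OF cs(1,3)] cs_int[OF cs(2,3)] nc[THEN conjunct1] nc[THEN conjunct2] HV[unfolded eq1 eq2]])
  qed
  show ?thesis using partA partB unfolding R_def by blast
qed


end
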